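(* Suppose the queries are chosen by GP-TS-SDF, i.e., $x_t\in\arg\max_{x\in\mathcal{Q}}f_t(x)$ where $f_t\sim\mathcal{GP}(\mu_{t-1}(\cdot),\nu_t^2\sigma^2_{t-1}(\cdot))$ given $\mathcal{F}_{t-1}$. For any filtration $\mathcal{F}_{t-1}$, conditioned on the event $E^f(t)$, $$\mathbb{P}\left(x_t\in\mathcal{Q}\setminus S_t\mid\mathcal{F}_{t-1}\right)\ge p-1/t^2,\qquad p=\frac{1}{4e\sqrt{\pi}}.$$
   Context: Setting. Let $\mathcal{Q}\subset\mathbb{R}^n$ be finite, $k$ a positive semidefinite kernel on $\mathcal{Q}$ with $k\le1$, and $f$ in the RKHS of $k$ with $\|f\|_k\le\mathcal{B}_f$; $x^\star\in\arg\max_{x\in\mathcal{Q}}f(x)$ and $\Delta(x)=f(x^\star)-f(x)$. Queries $x_1,x_2,\ldots$ are selected sequentially; feedback $y_t=f(x_t)+\epsilon_t$ with $R$-sub-Gaussian $\epsilon_t$ and $|y_t|\le\mathcal{B}_y$, observed after a random delay $d_t\in\{0,1,\ldots\}$ drawn from $\mathcal{D}$. For an integer $m\ge1$, $\rho_m=\mathbb{P}(d_s\le m)$, censored feedback $\tilde y_{s,t}=y_s\mathbb{1}\{d_s\le\min(m,t-s)\}$. With $\lambda>0$: $\mu_{t-1}(x)=\mathbf{k}_{t-1}(x)^\top(\mathbf{K}_{t-1}+\lambda I)^{-1}\tilde{\mathbf{y}}_{t-1}$, $\sigma^2_{t-1}(x,x')=k(x,x')-\mathbf{k}_{t-1}(x)^\top(\mathbf{K}_{t-1}+\lambda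 I)^{-1}\mathbf{k}_{t-1}(x')$, $\sigma^2_{t-1}(x)=\sigma^2_{t-1}(x,x)$, $\mathbf{k}_{t-1}(x)=(k(x,x_i))_{i\le t-1}$, $\mathbf{K}_{t-1}=(k(x_i,x_j))_{i,j\le t-1}$, $\tilde{\mathbf{y}}_{t-1}=(\tilde y_{s,t})_{s\le t-1}$. $\gamma_t=\max_A\frac12\log\det(I+\lambda^{-1}\mathbf{K}_A)$ over collections of $t$ points. For $\delta\in(0,1)$: $\beta_t=\mathcal{B}_f+(R+\mathcal{B}_y)\sqrt{2(\gamma_{t-1}+1+\log(4/\delta))}$, $\nu_t=\mathcal{B}_y\sum_{s=t-m}^{t-1}\sigma_{t-1}(x_s)+\beta_t$ (terms with $s<1$ omitted), $c_t=\nu_t(1+\sqrt{2\log(|\mathcal{Q}|t^2)})$. $\mathcal{F}_{t-1}$: history up to iteration $t-1$. $E^f(t)$: the event that $|\mu_{t-1}(x)-\rho_mf(x)|\le\nu_t\sigma_{t-1}(x)$ for all $x\in\mathcal{Q}$. Saturated set: $S_t=\{x\in\mathcal{Q}:\rho_m\Delta(x)>c_t\sigma_{t-1}(x)\}$. *)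

theory Defs
  imports "HOL-Probability.Probability"
          "Jordan_Normal_Form.Determinant"
          "Jordan_Normal_Form.Gauss_Jordan_Elimination"
begin

definition psd_kernel :: "'a set \<Rightarrow> ('a \<Rightarrow> 'a \<Rightarrow> real) \<Rightarrow> bool" where
  "psd_kernel Q k \<longleftrightarrow> (\<forall>x\<in>Q. \<forall>y\<in>Q. k x y = k y x) \<and>
     (\<forall>c :: 'a \<Rightarrow> real. (\<Sum>x\<in>Q. \<Sum>y\<in>Q. c x * c y * k x y) \<ge> 0)"

text \<open>On a finite domain Q the RKHS of k is the span of the sections k z (z in Q), and
  the RKHS norm of f = sum_z alpha_z k(z,.) is sqrt (alpha^T K alpha) (independent of the
  representation). \<open>rkhs_norm_le Q k f B\<close> says: f is in the RKHS and its norm is at most B.\<close>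
definition rkhs_norm_le :: "'a set \<Rightarrow> ('a \<Rightarrow> 'a \<Rightarrow> real) \<Rightarrow> ('a \<Rightarrow> real) \<Rightarrow> real \<Rightarrow> bool" where
  "rkhs_norm_le Q k f B \<longleftrightarrow> 0 \<le> B \<and> (\<exists>\<alpha> :: 'a \<Rightarrow> real.
      (\<forall>x\<in>Q. f x = (\<Sum>z\<in>Q. \<alpha> z * k z x)) \<and>
      (\<Sum>z\<in>Q. \<Sum>w\<in>Q. \<alpha> z * \<alpha> w * k z w) \<le> B\<^sup>2)"

definition kvec :: "('a \<Rightarrow> 'a \<Rightarrow> real) \<Rightarrow> 'a list \<Rightarrow> 'a \<Rightarrow> real vec" where
  "kvec k xs x = vec (length xs) (\<lambda>i. k (xs ! i) x)"

definition Kmat :: "('a \<Rightarrow> 'a \<Rightarrow> real) \<Rightarrow> 'a list \<Rightarrow> real mat" where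
  "Kmat k xs = mat (length xs) (length xs) (\<lambda>(i, j). k (xs ! i) (xs ! j))"

definition reg_inv :: "('a \<Rightarrow> 'a \<Rightarrow> real) \<Rightarrow> real \<Rightarrow> 'a list \<Rightarrow> real mat" where
  "reg_inv k lam xs = the (mat_inverse (Kmat k xs + lam \<cdot>\<^sub>m 1\<^sub>m (length xs)))"

definition post_mean :: "('a \<Rightarrow> 'a \<Rightarrow> real) \<Rightarrow> real \<Rightarrow> 'a list \<Rightarrow> real vec \<Rightarrow> 'a \<Rightarrow> real" where
  "post_mean k lam xs ys x = kvec k xs x \<bullet> (reg_inv k lam xs *\<^sub>v ys)"

definition post_cov :: "('a \<Rightarrow> 'a \<Rightarrow> real) \<Rightarrow> real \<Rightarrow> 'a list \<Rightarrow> 'a \<Rightarrow> 'a \<Rightarrow> real" where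
  "post_cov k lam xs x x' = k x x' - kvec k xs x \<bullet> (reg_inv k lam xs *\<^sub>v kvec k xs x')"

definition post_sd :: "('a \<Rightarrow> 'a \<Rightarrow> real) \<Rightarrow> real \<Rightarrow> 'a list \<Rightarrow> 'a \<Rightarrow> real" where
  "post_sd k lam xs x = sqrt (post_cov k lam xs x x)"

text \<open>Censored feedback vector at iteration t: entry i (0-based, i.e. s = i+1) is
  y_s * 1{d_s <= min(m, t - s)}.\<close>
definition censored_obs :: "nat \<Rightarrow> nat \<Rightarrow> real list \<Rightarrow> nat list \<Rightarrow> real vec" where
  "censored_obs m t ys ds = vec (length ys)
     (\<lambda>i. if ds ! i \<le> min m (t - Suc i) then ys ! i else 0)"

definition max_info_gain :: "'a set \<Rightarrow> ('a \<Rightarrow> 'a \<Rightarrow> real) \<Rightarrow> real \<Rightarrow> nat \<Rightarrow> real" where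
  "max_info_gain Q k lam n = Max ((\<lambda>A. ln (det (1\<^sub>m n + (1 / lam) \<cdot>\<^sub>m Kmat k A)) / 2)
        ` {A. set A \<subseteq> Q \<and> length A = n})"

definition beta_t :: "'a set \<Rightarrow> ('a \<Rightarrow> 'a \<Rightarrow> real) \<Rightarrow> real \<Rightarrow> real \<Rightarrow> real \<Rightarrow> real \<Rightarrow> real \<Rightarrow> nat \<Rightarrow> real" where
  "beta_t Q k lam Bf R By \<delta> t =
     Bf + (R + By) * sqrt (2 * (max_info_gain Q k lam (t - 1) + 1 + ln (4 / \<delta>)))"

text \<open>nu_t = B_y * sum_{s = t-m}^{t-1} sigma_{t-1}(x_s) + beta_t  (terms with s < 1 omitted);
  xs ! i is x_{i+1}.\<close>
definition nu_t :: "'a set \<Rightarrow> ('a \<Rightarrow> 'a \<Rightarrow> real) \<Rightarrow> real \<Rightarrow> real \<Rightarrow> real \<Rightarrow> real \<Rightarrow> real \<Rightarrow> nat \<Rightarrow> nat \<Rightarrow> 'a list \<Rightarrow> real" where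
  "nu_t Q k lam Bf R By \<delta> m t xs =
     By * (\<Sum>i\<in>{(t - 1) - m..<t - 1}. post_sd k lam xs (xs ! i)) + beta_t Q k lam Bf R By \<delta> t"

definition c_t :: "'a set \<Rightarrow> real \<Rightarrow> nat \<Rightarrow> real" where
  "c_t Q \<nu> t = \<nu> * (1 + sqrt (2 * ln (real (card Q) * (real t)\<^sup>2)))"

definition real_normal_rv :: "'w measure \<Rightarrow> ('w \<Rightarrow> real) \<Rightarrow> real \<Rightarrow> real \<Rightarrow> bool" where
  "real_normal_rv M X \<mu> v \<longleftrightarrow> X \<in> borel_measurable M \<and>
     (if v = 0 then (AE \<omega> in M. X \<omega> = \<mu>)
      else distributed M lborel X (normal_density \<mu> (sqrt v)))"

definition gaussian_process ::
  "'w measure \<Rightarrow> ('w \<Rightarrow> 'a \<Rightarrow> real) \<Rightarrow> 'a set \<Rightarrow> ('a \<Rightarrow> real) \<Rightarrow> ('a \<Rightarrow> 'a \<Rightarrow> real) \<Rightarrow> bool" where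
  "gaussian_process M F Q m C \<longleftrightarrow> prob_space M \<and>
     (\<forall>c :: 'a \<Rightarrow> real. real_normal_rv M (\<lambda>\<omega>. \<Sum>x\<in>Q. c x * F \<omega> x)
         (\<Sum>x\<in>Q. c x * m x) (\<Sum>x\<in>Q. \<Sum>y\<in>Q. c x * c y * C x y))"

end

theory Submission
  imports Defs
begin


lemma nd_sq_eq: "a\<^sup>2 = b\<^sup>2 \<Longrightarrow> normal_density \<mu> a = normal_density \<mu> b"
  by (rule ext) (simp add: normal_density_def)

lemma nn_normal_one: "0 < s \<Longrightarrow> (\<integral>\<^sup>+x. ennreal (normal_density \<mu> s x) \<partial>lborel) = 1"
  by (simp add: nn_integral_eq_integral normal_density_nonneg)

lemma tail_pt:
  assumes s: "s > 0" and L: "L \<ge> 0" and x: "x > \<mu> + s * L"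
  shows "normal_density \<mu> s x \<le> exp (- L\<^sup>2 / 2) * normal_density (\<mu> + s * L) s x"
proof -
  define u where "u = (x - \<mu>) / s"
  have xu: "x - \<mu> = s * u" using s by (simp add: u_def)
  have uL: "u \<ge> L" using x s by (simp add: u_def field_simps)
  have e1: "-(x - \<mu>)\<^sup>2 / (2 * s\<^sup>2) = - u\<^sup>2 / 2" using s by (simp add: xu power_mult_distrib)
  have e2: "-(x - (\<mu> + s * L))\<^sup>2 / (2 * s\<^sup>2) = - (u - L)\<^sup>2 / 2"
  proof -
    have "x - (\<mu> + s * L) = s * (u - L)" using xu by (simp add: algebra_simps)
    thus ?thesis using s by (simp add: power_mult_distrib)
  qed
  have "- u\<^sup>2 / 2 \<le> - L\<^sup>2 / 2 + - (u - L)\<^sup>2 / 2"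
    using L uL by (simp add: power2_eq_square field_simps) (smt (verit) mult_left_mono mult_nonneg_nonneg)
  hence "exp (- u\<^sup>2 / 2) \<le> exp (- L\<^sup>2 / 2) * exp (- (u - L)\<^sup>2 / 2)"
    by (simp add: exp_add[symmetric])
  thus ?thesis unfolding normal_density_def e1 e2
    by (simp, intro divide_right_mono) auto
qed

lemma tail_bound:
  assumes s: "s > 0" and L: "L \<ge> 0"
  shows "(\<integral>\<^sup>+x. ennreal (normal_density \<mu> s x) * indicator {\<mu> + s * L<..} x \<partial>lborel)
     \<le> ennreal (exp (- L\<^sup>2 / 2))"
proof -
  have "(\<integral>\<^sup>+x. ennreal (normal_density \<mu> s x) * indicator {\<mu> + s * L<..} x \<partial>lborel)
     \<le> (\<integral>\<^sup>+x. ennreal (exp (- L\<^sup>2 / 2)) * ennreal (normal_density (\<mu> + s * L) s x) \<partial>lborel)"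
  proof (rule nn_integral_mono)
    fix x
    show "ennreal (normal_density \<mu> s x) * indicator {\<mu> + s * L<..} x
       \<le> ennreal (exp (- L\<^sup>2 / 2)) * ennreal (normal_density (\<mu> + s * L) s x)"
      using tail_pt[OF s L, of \<mu> x]
      by (auto simp: indicator_def ennreal_mult[symmetric] ennreal_leI)
  qed
  also have "\<dots> = ennreal (exp (- L\<^sup>2 / 2)) * (\<integral>\<^sup>+x. ennreal (normal_density (\<mu> + s * L) s x) \<partial>lborel)"
    by (rule nn_integral_cmult) simp
  also have "\<dots> = ennreal (exp (- L\<^sup>2 / 2))" using nn_normal_one[OF s] by simp
  finally show ?thesis .
qed

lemma anti_bound:
  assumes s: "s > 0"
  shows "ennreal (exp (-2) / sqrt (2 * pi)) \<le>
     (\<integral>\<^sup>+x. ennreal (normal_density \<mu> s x) * indicator {\<mu> + s..} x \<partial>lborel)"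
proof -
  define c where "c = exp (-2) / (sqrt (2 * pi) * s)"
  have c0: "c \<ge> 0" using s by (simp add: c_def)
  have pt: "c \<le> normal_density \<mu> s x" if "\<mu> + s \<le> x" "x \<le> \<mu> + 2 * s" for x
  proof -
    have sq: "sqrt (2 * pi * s\<^sup>2) = sqrt (2 * pi) * s" using s by (simp add: real_sqrt_mult)
    have "(x - \<mu>)\<^sup>2 \<le> (2 * s)\<^sup>2" using that s by (intro power_mono) auto
    hence "(x - \<mu>)\<^sup>2 / (2 * s\<^sup>2) \<le> 2" using s by (simp add: field_simps power_mult_distrib)
    hence "exp (-2) \<le> exp (-(x - \<mu>)\<^sup>2 / (2 * s\<^sup>2))" by simp
    thus ?thesis unfolding normal_density_def c_def sq using s
      by (simp add: divide_right_mono)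
  qed
  have "ennreal (exp (-2) / sqrt (2 * pi)) = ennreal c * emeasure lborel {\<mu> + s..\<mu> + 2 * s}"
    using s by (simp add: c_def ennreal_mult[symmetric])
  also have "\<dots> = (\<integral>\<^sup>+x. ennreal c * indicator {\<mu> + s..\<mu> + 2 * s} x \<partial>lborel)"
    by (rule nn_integral_cmult_indicator[symmetric]) simp
  also have "\<dots> \<le> (\<integral>\<^sup>+x. ennreal (normal_density \<mu> s x) * indicator {\<mu> + s..} x \<partial>lborel)"
  proof (rule nn_integral_mono)
    fix x show "ennreal c * indicator {\<mu> + s..\<mu> + 2 * s} x \<le> ennreal (normal_density \<mu> s x) * indicator {\<mu> + s..} x"
      using pt[of x] by (auto simp: indicator_def ennreal_leI)
  qed
  finally show ?thesis .
qed

lemma const_ok: "1 / (4 * exp 1 * sqrt pi) \<le> exp (-2) / sqrt (2 * pi)"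
proof -
  have e: "exp (1::real) \<le> 2.72" using e_less_272 by simp
  have "exp 1 * sqrt 2 \<le> 4"
  proof -
    have "(exp 1 * sqrt 2)\<^sup>2 \<le> 4\<^sup>2"
    proof -
      have "exp 1 * exp 1 \<le> (2.72::real) * 2.72" using e by (intro mult_mono) auto
      hence "(exp 1)\<^sup>2 \<le> (8::real)" by (simp add: power2_eq_square)
      thus ?thesis by (simp add: power_mult_distrib)
    qed
    thus ?thesis by (rule power2_le_imp_le) simp
  qed
  hence le: "exp 1 * (exp 1 * sqrt 2) * sqrt pi \<le> exp 1 * 4 * sqrt pi"
    by (intro mult_right_mono mult_left_mono) auto
  have "exp (-2) / sqrt (2 * pi) = 1 / (exp 1 * (exp 1 * sqrt 2) * sqrt pi)"
    by (simp add: exp_minus exp_add[symmetric] inverse_eq_divide real_sqrt_mult)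
  moreover have "1 / (4 * exp 1 * sqrt pi) \<le> 1 / (exp 1 * (exp 1 * sqrt 2) * sqrt pi)"
    using le by (intro divide_left_mono) (auto simp: mult.commute)
  ultimately show ?thesis by simp
qed

lemma sum_delta_mult:
  assumes "finite Q" "x \<in> Q"
  shows "(\<Sum>y\<in>Q. (if y = x then 1 else 0) * g y) = (g x :: real)"
proof -
  have "(\<Sum>y\<in>Q. (if y = x then 1 else 0) * g y) = (\<Sum>y\<in>Q. if y = x then g y else 0)"
    by (rule sum.cong) auto
  also have "\<dots> = g x" using assms by simp
  finally show ?thesis .
qed

theorem lemma4:
  fixes Q :: "(real ^ 'n) set"
    and k :: "real ^ 'n \<Rightarrow> real ^ 'n \<Rightarrow> real"
    and f :: "real ^ 'n \<Rightarrow> real"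
    and xstar :: "real ^ 'n"
    and Bf R By lam \<delta> :: real
    and D :: "nat pmf"
    and m t :: nat
    and xs :: "(real ^ 'n) list" and ys :: "real list" and ds :: "nat list"
    and M :: "'w measure"
    and F :: "'w \<Rightarrow> real ^ 'n \<Rightarrow> real"
    and X :: "'w \<Rightarrow> real ^ 'n"
  assumes Q: "finite Q"
    and k_psd: "psd_kernel Q k"
    and k_le1: "\<forall>x\<in>Q. \<forall>y\<in>Q. k x y \<le> 1"
    and f_rkhs: "rkhs_norm_le Q k f Bf"
    and xstar: "xstar \<in> Q" "\<forall>x\<in>Q. f x \<le> f xstar"
    and R: "R \<ge> 0" and By: "By \<ge> 0"
    and lam: "lam > 0" and \<delta>: "0 < \<delta>" "\<delta> < 1"
    and m: "m \<ge> 1" and t: "t \<ge> 1"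
    and hist: "length xs = t - 1" "length ys = t - 1" "length ds = t - 1" "set xs \<subseteq> Q"
    and ys_bd: "\<forall>y\<in>set ys. \<bar>y\<bar> \<le> By"
    and Ef: "\<forall>x\<in>Q.
      \<bar>post_mean k lam xs (censored_obs m t ys ds) x - measure_pmf.prob D {..m} * f x\<bar>
        \<le> nu_t Q k lam Bf R By \<delta> m t xs * post_sd k lam xs x"
    and GP: "gaussian_process M F Q (post_mean k lam xs (censored_obs m t ys ds))
      (\<lambda>x x'. (nu_t Q k lam Bf R By \<delta> m t xs)\<^sup>2 * post_cov k lam xs x x')"
    and X_meas: "X \<in> measurable M (count_space UNIV)"
    and X_argmax: "\<forall>\<omega>\<in>space M. X \<omega> \<in> Q \<and> (\<forall>x\<in>Q. F \<omega> x \<le> F \<omega> (X \<omega>))"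
  shows "measure M {\<omega> \<in> space M. X \<omega> \<in> Q -
           {x \<in> Q. measure_pmf.prob D {..m} * (f xstar - f x)
                     > c_t Q (nu_t Q k lam Bf R By \<delta> m t xs) t * post_sd k lam xs x}}
         \<ge> 1 / (4 * exp 1 * sqrt pi) - 1 / (real t)\<^sup>2"
  proof -
  define \<rho> where "\<rho> = measure_pmf.prob D {..m}"
  define \<nu> where "\<nu> = nu_t Q k lam Bf R By \<delta> m t xs"
  define \<mu> where "\<mu> = post_mean k lam xs (censored_obs m t ys ds)"
  define s where "s x = \<nu> * post_sd k lam xs x" for x
  define L where "L = sqrt (2 * ln (real (card Q) * (real t)\<^sup>2))"
  define p :: real where "p = 1 / (4 * exp 1 * sqrt pi)"
  have PS: "prob_space M" using GP by (simp add: gaussian_process_def)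
  interpret prob_space M by (rule PS)
  have Ef': "\<bar>\<mu> x - \<rho> * f x\<bar> \<le> s x" if "x \<in> Q" for x
    using Ef that by (simp add: \<mu>_def \<rho>_def s_def \<nu>_def)
  have s0: "0 \<le> s x" if "x \<in> Q" for x using Ef'[OF that] by (meson abs_ge_zero order_trans)
  have ct: "c_t Q \<nu> t * post_sd k lam xs x = s x * (1 + L)" for x
    by (simp add: c_t_def s_def L_def algebra_simps)
  have dist: "(\<lambda>\<omega>. F \<omega> x) \<in> borel_measurable M \<and>
     (if s x = 0 then (AE \<omega> in M. F \<omega> x = \<mu> x)
      else distributed M lborel (\<lambda>\<omega>. F \<omega> x) (normal_density (\<mu> x) (s x)))" if x: "x \<in> Q" for x
  proof -
    define c where "c = (\<lambda>y. if y = x then 1 else (0::real))"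
    have "real_normal_rv M (\<lambda>\<omega>. \<Sum>y\<in>Q. c y * F \<omega> y) (\<Sum>y\<in>Q. c y * \<mu> y)
       (\<Sum>y\<in>Q. \<Sum>z\<in>Q. c y * c z * (\<nu>\<^sup>2 * post_cov k lam xs y z))"
      using GP unfolding gaussian_process_def \<mu>_def \<nu>_def by blast
    moreover have "(\<Sum>y\<in>Q. c y * F \<omega> y) = F \<omega> x" for \<omega>
    proof -
      have "(\<Sum>y\<in>Q. c y * F \<omega> y) = (\<Sum>y\<in>Q. if y = x then F \<omega> y else 0)"
        by (rule sum.cong) (auto simp: c_def)
      also have "\<dots> = F \<omega> x" using Q x by simp
      finally show ?thesis .
    qed
    moreover have "(\<Sum>y\<in>Q. c y * \<mu> y) = \<mu> x" unfolding c_def by (rule sum_delta_mult[OF Q x])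
    moreover have "(\<Sum>y\<in>Q. \<Sum>z\<in>Q. c y * c z * (\<nu>\<^sup>2 * post_cov k lam xs y z))
        = \<nu>\<^sup>2 * post_cov k lam xs x x"
    proof -
      have "(\<Sum>y\<in>Q. \<Sum>z\<in>Q. c y * c z * (\<nu>\<^sup>2 * post_cov k lam xs y z))
          = (\<Sum>y\<in>Q. c y * (\<nu>\<^sup>2 * post_cov k lam xs y x))"
      proof (rule sum.cong[OF refl])
        fix y
        have "(\<Sum>z\<in>Q. c y * c z * (\<nu>\<^sup>2 * post_cov k lam xs y z))
            = (\<Sum>z\<in>Q. c z * (c y * (\<nu>\<^sup>2 * post_cov k lam xs y z)))"
          by (simp add: algebra_simps)
        also have "\<dots> = c y * (\<nu>\<^sup>2 * post_cov k lam xs y x)"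
          unfolding c_def by (rule sum_delta_mult[OF Q x])
        finally show "(\<Sum>z\<in>Q. c y * c z * (\<nu>\<^sup>2 * post_cov k lam xs y z))
            = c y * (\<nu>\<^sup>2 * post_cov k lam xs y x)" .
      qed
      also have "\<dots> = \<nu>\<^sup>2 * post_cov k lam xs x x"
        unfolding c_def by (rule sum_delta_mult[OF Q x])
      finally show ?thesis .
    qed
    ultimately have rv: "real_normal_rv M (\<lambda>\<omega>. F \<omega> x) (\<mu> x) (\<nu>\<^sup>2 * post_cov k lam xs x x)"
      by simp
    define v where "v = \<nu>\<^sup>2 * post_cov k lam xs x x"
    have v0: "v = 0 \<longleftrightarrow> s x = 0" by (simp add: v_def s_def post_sd_def)
    have sa: "(sqrt a)\<^sup>2 = \<bar>a\<bar>" for a :: real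
      by (metis power2_eq_square real_sqrt_abs real_sqrt_mult)
    have vs: "(sqrt v)\<^sup>2 = (s x)\<^sup>2"
      by (simp add: sa s_def post_sd_def v_def power_mult_distrib abs_mult)
    have nd: "normal_density (\<mu> x) (sqrt v) = normal_density (\<mu> x) (s x)"
      by (rule nd_sq_eq[OF vs])
    show ?thesis using rv v0 nd unfolding real_normal_rv_def v_def[symmetric] by auto
  qed
  have measF: "(\<lambda>\<omega>. F \<omega> x) \<in> borel_measurable M" if "x \<in> Q" for x using dist[OF that] by blast
  show ?thesis
  proof (cases "t = 1")
    case True
    have "1 \<le> 4 * exp 1 * sqrt pi"
    proof -
      have "1 \<le> exp (1::real)" by simp
      moreover have "1 \<le> sqrt pi" using pi_gt3 by simp
      ultimately have "1 * 1 \<le> exp 1 * sqrt pi" by (intro mult_mono) auto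
      thus ?thesis by simp
    qed
    hence "1 / (4 * exp 1 * sqrt pi) - 1 / (real t)\<^sup>2 \<le> 0" using True by simp
    thus ?thesis by (meson measure_nonneg order_trans)
  next
    case False
    hence t2: "t \<ge> 2" using t by simp
    define N where "N = real (card Q) * (real t)\<^sup>2"
    have cQ: "card Q \<ge> 1" using Q xstar(1) by (metis One_nat_def Suc_leI card_gt_0_iff empty_iff)
    have N4: "N \<ge> 4"
    proof -
      have "(2::real)\<^sup>2 \<le> (real t)\<^sup>2" using t2 by (intro power_mono) auto
      moreover have "1 \<le> real (card Q)" using cQ by simp
      ultimately have "1 * 4 \<le> real (card Q) * (real t)\<^sup>2" by (intro mult_mono) auto
      thus ?thesis by (simp add: N_def)
    qed
    have lnN: "0 \<le> ln N" using N4 by simp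
    have L0: "L \<ge> 0" using lnN by (simp add: L_def N_def[symmetric])
    have LN: "exp (- L\<^sup>2 / 2) = 1 / N"
      using lnN N4 by (simp add: L_def N_def[symmetric] exp_minus inverse_eq_divide)
    define Sset where "Sset = {x \<in> Q. \<rho> * (f xstar - f x) > c_t Q \<nu> t * post_sd k lam xs x}"
    define T where "T = X -` (Q - Sset) \<inter> space M"
    define A where "A = (\<lambda>\<omega>. F \<omega> xstar) -` {\<rho> * f xstar..} \<inter> space M"
    define B where "B x = (\<lambda>\<omega>. F \<omega> x) -` {\<mu> x + s x * L<..} \<inter> space M" for x
    have T_sets: "T \<in> sets M" unfolding T_def by (rule measurable_sets[OF X_meas]) simp
    have A_sets: "A \<in> sets M" unfolding A_def by (rule measurable_sets[OF measF[OF xstar(1)]]) simp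
    have B_sets: "B x \<in> sets M" if "x \<in> Q" for x
      unfolding B_def by (rule measurable_sets[OF measF[OF that]]) simp
    have U_sets: "(\<Union>x\<in>Q. B x) \<in> sets M" using B_sets Q by auto
    have incl: "A - (\<Union>x\<in>Q. B x) \<subseteq> T"
    proof
      fix \<omega> assume \<omega>: "\<omega> \<in> A - (\<Union>x\<in>Q. B x)"
      hence sp: "\<omega> \<in> space M" and Fs: "\<rho> * f xstar \<le> F \<omega> xstar" by (auto simp: A_def)
      have XQ: "X \<omega> \<in> Q" and Xmax: "F \<omega> xstar \<le> F \<omega> (X \<omega>)" using X_argmax sp xstar(1) by auto
      have nB: "\<not> (\<mu> (X \<omega>) + s (X \<omega>) * L < F \<omega> (X \<omega>))" using \<omega> XQ sp by (auto simp: B_def)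
      have "X \<omega> \<notin> Sset"
      proof
        assume "X \<omega> \<in> Sset"
        hence sat: "\<rho> * (f xstar - f (X \<omega>)) > s (X \<omega>) * (1 + L)" by (simp add: Sset_def ct)
        have "\<mu> (X \<omega>) \<le> \<rho> * f (X \<omega>) + s (X \<omega>)" using Ef'[OF XQ] by linarith
        thus False using sat nB Fs Xmax by (simp add: algebra_simps)
      qed
      thus "\<omega> \<in> T" using XQ sp by (simp add: T_def)
    qed
    have pA: "p \<le> prob A"
    proof (cases "s xstar = 0")
      case True
      hence ae: "AE \<omega> in M. F \<omega> xstar = \<mu> xstar" using dist[OF xstar(1)] by simp
      have "\<mu> xstar \<ge> \<rho> * f xstar" using Ef'[OF xstar(1)] True by simp
      hence "AE \<omega> in M. \<omega> \<in> A" using ae by (auto simp: A_def)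
      hence "prob A = 1" using prob_eq_1[OF A_sets] by simp
      moreover have "p \<le> 1"
      proof -
        have "1 \<le> exp (1::real)" by simp
        moreover have "1 \<le> sqrt pi" using pi_gt3 by simp
        ultimately have "1 * 1 \<le> exp 1 * sqrt pi" by (intro mult_mono) auto
        thus ?thesis by (simp add: p_def)
      qed
      ultimately show ?thesis by simp
    next
      case False
      hence sp: "s xstar > 0" using s0[OF xstar(1)] by simp
      hence D: "distributed M lborel (\<lambda>\<omega>. F \<omega> xstar) (normal_density (\<mu> xstar) (s xstar))"
        using dist[OF xstar(1)] by simp
      have "ennreal (exp (-2) / sqrt (2 * pi)) \<le>
        (\<integral>\<^sup>+x. ennreal (normal_density (\<mu> xstar) (s xstar) x) * indicator {\<mu> xstar + s xstar..} x \<partial>lborel)"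
        by (rule anti_bound[OF sp])
      also have "\<dots> \<le> (\<integral>\<^sup>+x. ennreal (normal_density (\<mu> xstar) (s xstar) x) * indicator {\<rho> * f xstar..} x \<partial>lborel)"
      proof (rule nn_integral_mono)
        fix x
        have "\<rho> * f xstar \<le> \<mu> xstar + s xstar" using Ef'[OF xstar(1)] by linarith
        thus "ennreal (normal_density (\<mu> xstar) (s xstar) x) * indicator {\<mu> xstar + s xstar..} x
          \<le> ennreal (normal_density (\<mu> xstar) (s xstar) x) * indicator {\<rho> * f xstar..} x"
          by (auto simp: indicator_def)
      qed
      also have "\<dots> = emeasure M A"
        unfolding A_def by (rule distributed_emeasure[OF D, symmetric]) simp
      also have "\<dots> = ennreal (prob A)" by (rule emeasure_eq_measure)
      finally have "exp (-2) / sqrt (2 * pi) \<le> prob A" by (simp add: ennreal_le_iff)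
      thus ?thesis using const_ok by (simp add: p_def)
    qed
    have pB: "prob (B x) \<le> 1 / N" if x: "x \<in> Q" for x
    proof (cases "s x = 0")
      case True
      hence ae: "AE \<omega> in M. F \<omega> x = \<mu> x" using dist[OF x] by simp
      hence "AE \<omega> in M. \<omega> \<notin> B x" by (auto simp: B_def True)
      hence "prob (B x) = 0" using prob_eq_0[OF B_sets[OF x]] by simp
      thus ?thesis using N4 by simp
    next
      case False
      hence sp: "s x > 0" using s0[OF x] by simp
      hence D: "distributed M lborel (\<lambda>\<omega>. F \<omega> x) (normal_density (\<mu> x) (s x))"
        using dist[OF x] by simp
      have "ennreal (prob (B x)) = emeasure M (B x)" by (rule emeasure_eq_measure[symmetric])
      also have "\<dots> = (\<integral>\<^sup>+y. ennreal (normal_density (\<mu> x) (s x) y) * indicator {\<mu> x + s x * L<..} y \<partial>lborel)"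
        unfolding B_def by (rule distributed_emeasure[OF D]) simp
      also have "\<dots> \<le> ennreal (exp (- L\<^sup>2 / 2))" by (rule tail_bound[OF sp L0])
      finally show ?thesis using LN N4 by (simp add: ennreal_le_iff)
    qed
    have "prob T \<ge> prob (A - (\<Union>x\<in>Q. B x))"
      by (rule finite_measure_mono[OF incl T_sets])
    moreover have "prob (A - (\<Union>x\<in>Q. B x)) = prob A - prob (A \<inter> (\<Union>x\<in>Q. B x))"
      by (rule finite_measure_Diff'[OF A_sets U_sets])
    moreover have "prob (A \<inter> (\<Union>x\<in>Q. B x)) \<le> prob (\<Union>x\<in>Q. B x)"
      by (rule finite_measure_mono[OF _ U_sets]) auto
    moreover have "prob (\<Union>x\<in>Q. B x) \<le> (\<Sum>x\<in>Q. prob (B x))"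
      by (rule finite_measure_subadditive_finite[OF Q]) (use B_sets in auto)
    moreover have "(\<Sum>x\<in>Q. prob (B x)) \<le> (\<Sum>x\<in>Q. 1 / N)"
      by (rule sum_mono) (rule pB)
    moreover have "(\<Sum>x\<in>Q. 1 / N) = 1 / (real t)\<^sup>2"
      using cQ by (simp add: N_def)
    ultimately have fin: "prob T \<ge> p - 1 / (real t)\<^sup>2" using pA by linarith
    have "{\<omega> \<in> space M. X \<omega> \<in> Q -
           {x \<in> Q. measure_pmf.prob D {..m} * (f xstar - f x)
                     > c_t Q (nu_t Q k lam Bf R By \<delta> m t xs) t * post_sd k lam xs x}} = T"
      by (auto simp: T_def Sset_def \<rho>_def \<nu>_def)
    thus ?thesis using fin by (simp add: p_def)
  qed
qed

end
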